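(* Let $\varphi \in \mathcal{L}^s(\Theta;\tau)$ for some $s\in\{\pm,+,-\}$, let $\rho$ be a valuation of $\Theta$ and let $i$ be an iteration variable. If $i \mathrel{\mathrm{Pos}} \varphi$, then $n \le m$ implies $[\![\varphi]\!]\rho[n/i] \subseteq [\![\varphi]\!]\rho[m/i]$. If $i \mathrel{\mathrm{Neg}} \varphi$, then $m \le n$ implies $[\![\varphi]\!]\rho[n/i] \subseteq [\![\varphi]\!]\rho[m/i]$.
   Context: Pure types: closed types of $\tau ::= \mathbf{1} \mid \tau\times\tau \mid \tau\to\tau \mid \tau+\tau \mid \alpha \mid \mu\alpha.\tau$, interpreted as Scott domains: $[\![\mathbf{1}]\!]=\{\bot\le\top\}$; products componentwise with projections $\pi_1,\pi_2$; $[\![\tau\to\sigma]\!]$ = Scott-continuous functions with pointwise order; $[\![\tau_1+\tau_2]\!]$ = disjoint union with a new bottom, with injections $\mathrm{inj}_i$; $[\![\mu\alpha.\tau]\!]$ = canonical bilimit solution with inverse isomorphisms $\mathrm{fold}:[\![\tau[\mu\alpha.\tau/\alpha]]\!]\to[\![\mu\alpha.\tau]\!]$, $\mathrm{unfold}$. Iteration terms: $t ::= i \mid 0 \mid t+1$. Fixpoint contexts $\Theta = X_1:\sigma_1,\dots,X_n:\sigma_n$. For $s\in\{\pm,+,-\}$, $\mathcal{L}^s(\Theta;\tau)$ is generated by: $\mathrm{True},\mathrm{False}$; closure under $\wedge,\vee$; $\langle()\rangle\in\mathcal{L}^s(\Theta;\mathbf{1})$; $\langle\pi_i\rangle\varphi$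 (type $\tau_1\times\tau_2$, $\varphi$ of type $\tau_i$); $\langle\mathrm{inj}_i\rangle\varphi$ (type $\tau_1+\tau_2$, $\varphi$ of type $\tau_i$); $\langle\mathrm{fold}\rangle\varphi$ (type $\mu\alpha.\tau$, $\varphi$ of type $\tau[\mu\alpha.\tau/\alpha]$); $X$ if $(X:\tau)\in\Theta$; weakening of $\Theta$; $(\mu^t X)\varphi,(\nu^t X)\varphi\in\mathcal{L}^s(\Theta;\tau)$ if $\varphi\in\mathcal{L}^s(\Theta,X:\tau;\tau)$; $(\exists i)\varphi\in\mathcal{L}^+(\Theta;\tau)$ if $\varphi\in\mathcal{L}^+(\Theta;\tau)$ and $i \mathrel{\mathrm{Pos}} \varphi$; $(\forall i)\varphi\in\mathcal{L}^-(\Theta;\tau)$ if $\varphi\in\mathcal{L}^-(\Theta;\tau)$ and $i\mathrel{\mathrm{Neg}}\varphi$; $\psi\Rightarrow\varphi\in\mathcal{L}^s(\,;\sigma\to\tau)$ if $\psi\in\mathcal{L}^{-s}(\,;\sigma)$ and $\varphi\in\mathcal{L}^s(\,;\tau)$, where $-\pm=\pm$, $-+=-$, $--=+$. The predicates Pos, Neg are inductively defined: $i\mathrel{\mathrm{Pos}}\varphi$ and $i\mathrel{\mathrm{Neg}}\varphi$ hold if $i$ not free in $\varphi$; both preserved by $\wedge,\vee$ and the modalities $\langle\pi_j\rangle,\langle\mathrm{inj}_j\rangle,\langle\mathrm{fold}\rangle$; $i\mathrel{\mathrm{Pos}}(\psi\Rightarrow\varphi)$ if $i\mathrel{\mathrm{Neg}}\psi$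 and $i\mathrel{\mathrm{Pos}}\varphi$; $i\mathrel{\mathrm{Neg}}(\psi\Rightarrow\varphi)$ if $i\mathrel{\mathrm{Pos}}\psi$ and $i\mathrel{\mathrm{Neg}}\varphi$; $i\mathrel{\mathrm{Pos}}(\exists j)\varphi$ if $i\mathrel{\mathrm{Pos}}\varphi$; $i\mathrel{\mathrm{Neg}}(\forall j)\varphi$ if $i\mathrel{\mathrm{Neg}}\varphi$; $i\mathrel{\mathrm{Pos}}(\mu^tX)\varphi$ if $i\mathrel{\mathrm{Pos}}\varphi$; $i\mathrel{\mathrm{Pos}}(\nu^tX)\varphi$ if $i\mathrel{\mathrm{Pos}}\varphi$ and $i$ not free in $t$; $i\mathrel{\mathrm{Neg}}(\nu^tX)\varphi$ if $i\mathrel{\mathrm{Neg}}\varphi$; $i\mathrel{\mathrm{Neg}}(\mu^tX)\varphi$ if $i\mathrel{\mathrm{Neg}}\varphi$ and $i$ not free in $t$. Semantics: a valuation $\rho$ of $\Theta$ maps each $(X:\sigma)\in\Theta$ to $\rho(X)\subseteq[\![\sigma]\!]$ and iteration variables to naturals ($[\![t]\!]\rho\in\mathbb{N}$). $[\![\mathrm{True}]\!]\rho=[\![\tau]\!]$, $[\![\mathrm{False}]\!]\rho=\emptyset$, $\wedge,\vee$ are $\cap,\cup$, $[\![X]\!]\rho=\rho(X)$, $[\![\langle()\rangle]\!]\rho=\{\top\}$, $[\![\langle\pi_i\rangle\varphi]\!]\rho=\{x\mid \pi_i(x)\in[\![\varphi]\!]\rho\}$, $[\![\langle\mathrm{inj}_i\rangle\varphi]\!]\rho=\{\mathrm{inj}_i(x)\mid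 x\in[\![\varphi]\!]\rho\}$, $[\![\langle\mathrm{fold}\rangle\varphi]\!]\rho=\{x\mid\mathrm{unfold}(x)\in[\![\varphi]\!]\rho\}$, $[\![\psi\Rightarrow\varphi]\!]\rho=\{f\mid\forall x\in[\![\psi]\!]\rho,\ f(x)\in[\![\varphi]\!]\rho\}$, $[\![(\exists i)\varphi]\!]\rho=\bigcup_{n}[\![\varphi]\!]\rho[n/i]$, $[\![(\forall i)\varphi]\!]\rho=\bigcap_{n}[\![\varphi]\!]\rho[n/i]$, and with $F(S)=[\![\varphi]\!]\rho[S/X]$, $n=[\![t]\!]\rho$: $[\![(\mu^tX)\varphi]\!]\rho=F^n(\emptyset)$, $[\![(\nu^tX)\varphi]\!]\rho=F^n([\![\tau]\!])$. *)

theory Defs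
  imports Main
begin

datatype ty = One | Prod ty ty | Arr ty ty | Sum ty ty | TVar nat | Mu ty

fun ty_ok :: "nat \<Rightarrow> ty \<Rightarrow> bool" where
  "ty_ok k One = True"
| "ty_ok k (Prod a b) = (ty_ok k a \<and> ty_ok k b)"
| "ty_ok k (Arr a b) = (ty_ok k a \<and> ty_ok k b)"
| "ty_ok k (Sum a b) = (ty_ok k a \<and> ty_ok k b)"
| "ty_ok k (TVar j) = (j < k)"
| "ty_ok k (Mu a) = ty_ok (Suc k) a"

definition closed_ty :: "ty \<Rightarrow> bool" where
  "closed_ty t = ty_ok 0 t"

fun lift_ty :: "nat \<Rightarrow> ty \<Rightarrow> ty" where
  "lift_ty k One = One"
| "lift_ty k (Prod a b) = Prod (lift_ty k a) (lift_ty k b)"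
| "lift_ty k (Arr a b) = Arr (lift_ty k a) (lift_ty k b)"
| "lift_ty k (Sum a b) = Sum (lift_ty k a) (lift_ty k b)"
| "lift_ty k (TVar j) = (if k \<le> j then TVar (Suc j) else TVar j)"
| "lift_ty k (Mu a) = Mu (lift_ty (Suc k) a)"

fun subst_ty :: "nat \<Rightarrow> ty \<Rightarrow> ty \<Rightarrow> ty" where
  "subst_ty k u One = One"
| "subst_ty k u (Prod a b) = Prod (subst_ty k u a) (subst_ty k u b)"
| "subst_ty k u (Arr a b) = Arr (subst_ty k u a) (subst_ty k u b)"
| "subst_ty k u (Sum a b) = Sum (subst_ty k u a) (subst_ty k u b)"
| "subst_ty k u (TVar j) = (if j = k then u else if k < j then TVar (j - 1) else TVar j)"
| "subst_ty k u (Mu a) = Mu (subst_ty (Suc k) (lift_ty 0 u) a)"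

definition unfold_ty :: "ty \<Rightarrow> ty" where
  "unfold_ty a = subst_ty 0 (Mu a) a"

datatype itm = IVar nat | IZero | ISuc itm

fun itm_vars :: "itm \<Rightarrow> nat set" where
  "itm_vars (IVar i) = {i}"
| "itm_vars IZero = {}"
| "itm_vars (ISuc t) = itm_vars t"

fun itm_eval :: "(nat \<Rightarrow> nat) \<Rightarrow> itm \<Rightarrow> nat" where
  "itm_eval r (IVar i) = r i"
| "itm_eval r IZero = 0"
| "itm_eval r (ISuc t) = Suc (itm_eval r t)"

datatype form =
    FTrue | FFalse | FAnd form form | FOr form form
  | FUnit
  | FPi1 form | FPi2 form
  | FInj1 form | FInj2 form
  | FFold form
  | FVar nat
  | FMu itm nat form
  | FNu itm nat form
  | FEx nat form
  | FAll nat form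
  | FImp form form

fun fiv :: "form \<Rightarrow> nat set" where
  "fiv FTrue = {}"
| "fiv FFalse = {}"
| "fiv (FAnd a b) = fiv a \<union> fiv b"
| "fiv (FOr a b) = fiv a \<union> fiv b"
| "fiv FUnit = {}"
| "fiv (FPi1 a) = fiv a"
| "fiv (FPi2 a) = fiv a"
| "fiv (FInj1 a) = fiv a"
| "fiv (FInj2 a) = fiv a"
| "fiv (FFold a) = fiv a"
| "fiv (FVar X) = {}"
| "fiv (FMu t X a) = itm_vars t \<union> fiv a"
| "fiv (FNu t X a) = itm_vars t \<union> fiv a"
| "fiv (FEx i a) = fiv a - {i}"
| "fiv (FAll i a) = fiv a - {i}"
| "fiv (FImp a b) = fiv a \<union> fiv b"

datatype pol = PM | PPlus | PMinus

fun neg_pol :: "pol \<Rightarrow> pol" where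
  "neg_pol PM = PM" | "neg_pol PPlus = PMinus" | "neg_pol PMinus = PPlus"

inductive ipos :: "nat \<Rightarrow> form \<Rightarrow> bool" and ineg :: "nat \<Rightarrow> form \<Rightarrow> bool" where
  pos_nf: "i \<notin> fiv a \<Longrightarrow> ipos i a"
| neg_nf: "i \<notin> fiv a \<Longrightarrow> ineg i a"
| pos_and: "ipos i a \<Longrightarrow> ipos i b \<Longrightarrow> ipos i (FAnd a b)"
| neg_and: "ineg i a \<Longrightarrow> ineg i b \<Longrightarrow> ineg i (FAnd a b)"
| pos_or: "ipos i a \<Longrightarrow> ipos i b \<Longrightarrow> ipos i (FOr a b)"
| neg_or: "ineg i a \<Longrightarrow> ineg i b \<Longrightarrow> ineg i (FOr a b)"
| pos_pi1: "ipos i a \<Longrightarrow> ipos i (FPi1 a)"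
| neg_pi1: "ineg i a \<Longrightarrow> ineg i (FPi1 a)"
| pos_pi2: "ipos i a \<Longrightarrow> ipos i (FPi2 a)"
| neg_pi2: "ineg i a \<Longrightarrow> ineg i (FPi2 a)"
| pos_inj1: "ipos i a \<Longrightarrow> ipos i (FInj1 a)"
| neg_inj1: "ineg i a \<Longrightarrow> ineg i (FInj1 a)"
| pos_inj2: "ipos i a \<Longrightarrow> ipos i (FInj2 a)"
| neg_inj2: "ineg i a \<Longrightarrow> ineg i (FInj2 a)"
| pos_fold: "ipos i a \<Longrightarrow> ipos i (FFold a)"
| neg_fold: "ineg i a \<Longrightarrow> ineg i (FFold a)"
| pos_imp: "ineg i b \<Longrightarrow> ipos i a \<Longrightarrow> ipos i (FImp b a)"
| neg_imp: "ipos i b \<Longrightarrow> ineg i a \<Longrightarrow> ineg i (FImp b a)"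
| pos_ex: "ipos i a \<Longrightarrow> ipos i (FEx j a)"
| neg_all: "ineg i a \<Longrightarrow> ineg i (FAll j a)"
| pos_mu: "ipos i a \<Longrightarrow> ipos i (FMu t X a)"
| pos_nu: "ipos i a \<Longrightarrow> i \<notin> itm_vars t \<Longrightarrow> ipos i (FNu t X a)"
| neg_nu: "ineg i a \<Longrightarrow> ineg i (FNu t X a)"
| neg_mu: "ineg i a \<Longrightarrow> i \<notin> itm_vars t \<Longrightarrow> ineg i (FMu t X a)"

text \<open>Fixpoint contexts are finite maps from fixpoint variables to types.
  wf s Theta phi tau  means  phi \<in> L^s(Theta; tau).\<close>

inductive wf :: "pol \<Rightarrow> (nat \<rightharpoonup> ty) \<Rightarrow> form \<Rightarrow> ty \<Rightarrow> bool" where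
  wf_true: "closed_ty t \<Longrightarrow> wf s G FTrue t"
| wf_false: "closed_ty t \<Longrightarrow> wf s G FFalse t"
| wf_and: "wf s G a t \<Longrightarrow> wf s G b t \<Longrightarrow> wf s G (FAnd a b) t"
| wf_or: "wf s G a t \<Longrightarrow> wf s G b t \<Longrightarrow> wf s G (FOr a b) t"
| wf_unit: "wf s G FUnit One"
| wf_pi1: "wf s G a t1 \<Longrightarrow> closed_ty t2 \<Longrightarrow> wf s G (FPi1 a) (Prod t1 t2)"
| wf_pi2: "wf s G a t2 \<Longrightarrow> closed_ty t1 \<Longrightarrow> wf s G (FPi2 a) (Prod t1 t2)"
| wf_inj1: "wf s G a t1 \<Longrightarrow> closed_ty t2 \<Longrightarrow> wf s G (FInj1 a) (Sum t1 t2)"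
| wf_inj2: "wf s G a t2 \<Longrightarrow> closed_ty t1 \<Longrightarrow> wf s G (FInj2 a) (Sum t1 t2)"
| wf_fold: "wf s G a (unfold_ty t) \<Longrightarrow> closed_ty (Mu t) \<Longrightarrow> wf s G (FFold a) (Mu t)"
| wf_var: "G X = Some t \<Longrightarrow> closed_ty t \<Longrightarrow> wf s G (FVar X) t"
| wf_weak: "wf s G a t \<Longrightarrow> G \<subseteq>\<^sub>m G' \<Longrightarrow> wf s G' a t"
| wf_mu: "wf s (G(X \<mapsto> t)) a t \<Longrightarrow> wf s G (FMu n X a) t"
| wf_nu: "wf s (G(X \<mapsto> t)) a t \<Longrightarrow> wf s G (FNu n X a) t"
| wf_ex: "wf PPlus G a t \<Longrightarrow> ipos i a \<Longrightarrow> wf PPlus G (FEx i a) t"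
| wf_all: "wf PMinus G a t \<Longrightarrow> ineg i a \<Longrightarrow> wf PMinus G (FAll i a) t"
| wf_imp: "wf (neg_pol s) Map.empty b sg \<Longrightarrow> wf s Map.empty a t \<Longrightarrow>
             wf s Map.empty (FImp b a) (Arr sg t)"

text \<open>An abstract interpretation of the pure types: a universe of values 'd,
  a carrier for each type, the top element of [[1]], projections, injections,
  unfold, and function application.  The Scott-domain interpretation of the paper
  is one instance.\<close>

record 'd sem_struct =
  dom :: "ty \<Rightarrow> 'd set"
  topv :: 'd
  proj1 :: "'d \<Rightarrow> 'd"
  proj2 :: "'d \<Rightarrow> 'd"
  inj1 :: "'d \<Rightarrow> 'd"
  inj2 :: "'d \<Rightarrow> 'd"
  unfoldv :: "'d \<Rightarrow> 'd"
  appv :: "'d \<Rightarrow> 'd \<Rightarrow> 'd"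

definition sem_ok :: "'d sem_struct \<Rightarrow> bool" where
  "sem_ok M \<longleftrightarrow> topv M \<in> dom M One
     \<and> (\<forall>t1 t2 x. closed_ty t1 \<longrightarrow> closed_ty t2 \<longrightarrow> x \<in> dom M t1 \<longrightarrow> inj1 M x \<in> dom M (Sum t1 t2))
     \<and> (\<forall>t1 t2 x. closed_ty t1 \<longrightarrow> closed_ty t2 \<longrightarrow> x \<in> dom M t2 \<longrightarrow> inj2 M x \<in> dom M (Sum t1 t2))"

text \<open>Semantics [[phi]]rho at type tau.  rs: values of fixpoint variables,
  ri: values of iteration variables.\<close>

fun sem :: "'d sem_struct \<Rightarrow> (nat \<Rightarrow> 'd set) \<Rightarrow> (nat \<Rightarrow> nat) \<Rightarrow> form \<Rightarrow> ty \<Rightarrow> 'd set" where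
  "sem M rs ri FTrue t = dom M t"
| "sem M rs ri FFalse t = {}"
| "sem M rs ri (FAnd a b) t = sem M rs ri a t \<inter> sem M rs ri b t"
| "sem M rs ri (FOr a b) t = sem M rs ri a t \<union> sem M rs ri b t"
| "sem M rs ri FUnit t = {topv M}"
| "sem M rs ri (FPi1 a) t = (case t of Prod t1 t2 \<Rightarrow>
      {x \<in> dom M t. proj1 M x \<in> sem M rs ri a t1} | _ \<Rightarrow> {})"
| "sem M rs ri (FPi2 a) t = (case t of Prod t1 t2 \<Rightarrow>
      {x \<in> dom M t. proj2 M x \<in> sem M rs ri a t2} | _ \<Rightarrow> {})"
| "sem M rs ri (FInj1 a) t = (case t of Sum t1 t2 \<Rightarrow>
      inj1 M ` sem M rs ri a t1 | _ \<Rightarrow> {})"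
| "sem M rs ri (FInj2 a) t = (case t of Sum t1 t2 \<Rightarrow>
      inj2 M ` sem M rs ri a t2 | _ \<Rightarrow> {})"
| "sem M rs ri (FFold a) t = (case t of Mu t1 \<Rightarrow>
      {x \<in> dom M t. unfoldv M x \<in> sem M rs ri a (unfold_ty t1)} | _ \<Rightarrow> {})"
| "sem M rs ri (FVar X) t = rs X"
| "sem M rs ri (FMu n X a) t =
      ((\<lambda>S. sem M (rs(X := S)) ri a t) ^^ itm_eval ri n) {}"
| "sem M rs ri (FNu n X a) t =
      ((\<lambda>S. sem M (rs(X := S)) ri a t) ^^ itm_eval ri n) (dom M t)"
| "sem M rs ri (FEx i a) t = (\<Union>k. sem M rs (ri(i := k)) a t)"
| "sem M rs ri (FAll i a) t = (\<Inter>k. sem M rs (ri(i := k)) a t)"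
| "sem M rs ri (FImp b a) t = (case t of Arr sg t2 \<Rightarrow>
      {f \<in> dom M t. \<forall>x \<in> sem M rs ri b sg. appv M f x \<in> sem M rs ri a t2} | _ \<Rightarrow> {})"

end

theory Submission
  imports Defs
begin

lemma itm_indep: "i \<notin> itm_vars t \<Longrightarrow> itm_eval (ri(i := n)) t = itm_eval (ri(i := m)) t"
  by (induction t) auto

lemma itm_mono: "n \<le> m \<Longrightarrow> itm_eval (ri(i := n)) t \<le> itm_eval (ri(i := m)) t"
  by (induction t) auto

lemma fiv_indep: "i \<notin> fiv a \<Longrightarrow> sem M rs (ri(i := n)) a t = sem M rs (ri(i := m)) a t"
proof (induction a arbitrary: rs ri t)
  case (FMu x1 x2 a)
  have e: "itm_eval (ri(i := n)) x1 = itm_eval (ri(i := m)) x1" using FMu by (simp add: itm_indep)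
  have "(\<lambda>S. sem M (rs(x2 := S)) (ri(i := n)) a t) = (\<lambda>S. sem M (rs(x2 := S)) (ri(i := m)) a t)"
    using FMu.prems by (intro ext FMu.IH) simp
  then show ?case using e by (simp del: fun_upd_apply)
next
  case (FNu x1 x2 a)
  have e: "itm_eval (ri(i := n)) x1 = itm_eval (ri(i := m)) x1" using FNu by (simp add: itm_indep)
  have "(\<lambda>S. sem M (rs(x2 := S)) (ri(i := n)) a t) = (\<lambda>S. sem M (rs(x2 := S)) (ri(i := m)) a t)"
    using FNu.prems by (intro ext FNu.IH) simp
  then show ?case using e by (simp del: fun_upd_apply)
next
  case (FEx j a)
  show ?case
  proof (cases "i = j")
    case False
    then have "\<And>k. sem M rs (ri(i := n, j := k)) a t = sem M rs (ri(i := m, j := k)) a t"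
      using FEx by (metis Diff_iff empty_iff fiv.simps(14) fun_upd_twist insert_iff)
    then show ?thesis by (simp del: fun_upd_apply)
  qed (simp del: fun_upd_apply)
next
  case (FAll j a)
  show ?case
  proof (cases "i = j")
    case False
    then have "\<And>k. sem M rs (ri(i := n, j := k)) a t = sem M rs (ri(i := m, j := k)) a t"
      using FAll by (metis Diff_iff empty_iff fiv.simps(15) fun_upd_twist insert_iff)
    then show ?thesis by (simp del: fun_upd_apply)
  qed (simp del: fun_upd_apply)
qed (auto split: ty.splits)

lemma wf_closed: "wf s G a t \<Longrightarrow> closed_ty t"
  by (induction rule: wf.induct) (auto simp: closed_ty_def)

lemma fp_into: "(\<And>A. A \<subseteq> D \<Longrightarrow> F A \<subseteq> D) \<Longrightarrow> X \<subseteq> D \<Longrightarrow> (F ^^ k) X \<subseteq> D"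
  by (induction k) auto

lemma fp_mono2:
  assumes "\<And>A B. A \<subseteq> B \<Longrightarrow> B \<subseteq> D \<Longrightarrow> F A \<subseteq> G B" "\<And>A. A \<subseteq> D \<Longrightarrow> G A \<subseteq> D"
    "X \<subseteq> Y" "Y \<subseteq> D"
  shows "(F ^^ k) X \<subseteq> (G ^^ k) Y"
proof (induction k)
  case (Suc k)
  have "(G ^^ k) Y \<subseteq> D" using fp_into[of D G Y k] assms by blast
  then show ?case using Suc assms(1) by simp
qed (use assms in simp)

lemma fp_inc:
  assumes "\<And>A B. A \<subseteq> B \<Longrightarrow> B \<subseteq> D \<Longrightarrow> F A \<subseteq> F B" "\<And>A. A \<subseteq> D \<Longrightarrow> F A \<subseteq> D"
    "X \<subseteq> F X" "X \<subseteq> D"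
  shows "(F ^^ k) X \<subseteq> (F ^^ Suc k) X"
proof (induction k)
  case (Suc k)
  have "(F ^^ Suc k) X \<subseteq> D" using fp_into[of D F X "Suc k"] assms by blast
  then show ?case using Suc assms(1) by simp
qed (use assms in simp)

lemma fp_inc2:
  assumes "\<And>A B. A \<subseteq> B \<Longrightarrow> B \<subseteq> D \<Longrightarrow> F A \<subseteq> F B" "\<And>A. A \<subseteq> D \<Longrightarrow> F A \<subseteq> D"
    "X \<subseteq> F X" "X \<subseteq> D" "k \<le> k'"
  shows "(F ^^ k) X \<subseteq> (F ^^ k') X"
  using assms(5)
proof (induction k' rule: dec_induct)
  case (step j)
  then show ?case using fp_inc[of D F X j, OF assms(1-4)] by blast
qed simp

lemma fp_dec:
  assumes "\<And>A B. A \<subseteq> B \<Longrightarrow> B \<subseteq> D \<Longrightarrow> F A \<subseteq> F B" "\<And>A. A \<subseteq> D \<Longrightarrow> F A \<subseteq> D"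
    "X = D"
  shows "(F ^^ Suc k) X \<subseteq> (F ^^ k) X"
proof (induction k)
  case (Suc k)
  have "(F ^^ k) X \<subseteq> D" using fp_into[of D F X k] assms by blast
  then show ?case using Suc assms(1) by simp
qed (use assms in simp)

lemma fp_dec2:
  assumes "\<And>A B. A \<subseteq> B \<Longrightarrow> B \<subseteq> D \<Longrightarrow> F A \<subseteq> F B" "\<And>A. A \<subseteq> D \<Longrightarrow> F A \<subseteq> D"
    "X = D" "k \<le> k'"
  shows "(F ^^ k') X \<subseteq> (F ^^ k) X"
  using assms(4)
proof (induction k' rule: dec_induct)
  case (step j)
  then show ?case using fp_dec[of D F X j, OF assms(1-3)] by blast
qed simp


definition valid :: "'d sem_struct \<Rightarrow> (nat \<rightharpoonup> ty) \<Rightarrow> (nat \<Rightarrow> 'd set) \<Rightarrow> bool" where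
  "valid M G rs \<longleftrightarrow> (\<forall>X sg. G X = Some sg \<longrightarrow> rs X \<subseteq> dom M sg)"

definition le_env :: "(nat \<rightharpoonup> ty) \<Rightarrow> (nat \<Rightarrow> 'd set) \<Rightarrow> (nat \<Rightarrow> 'd set) \<Rightarrow> bool" where
  "le_env G rs rs' \<longleftrightarrow> (\<forall>X sg. G X = Some sg \<longrightarrow> rs X \<subseteq> rs' X)"

definition P :: "'d sem_struct \<Rightarrow> (nat \<rightharpoonup> ty) \<Rightarrow> form \<Rightarrow> ty \<Rightarrow> bool" where
  "P M G phi tau \<longleftrightarrow> (\<forall>rs ri. valid M G rs \<longrightarrow>
     sem M rs ri phi tau \<subseteq> dom M tau
   \<and> (\<forall>rs'. valid M G rs' \<longrightarrow> le_env G rs rs' \<longrightarrow> sem M rs ri phi tau \<subseteq> sem M rs' ri phi tau)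
   \<and> (\<forall>i n m. ipos i phi \<longrightarrow> n \<le> m \<longrightarrow> sem M rs (ri(i:=n)) phi tau \<subseteq> sem M rs (ri(i:=m)) phi tau)
   \<and> (\<forall>i n m. ineg i phi \<longrightarrow> m \<le> n \<longrightarrow> sem M rs (ri(i:=n)) phi tau \<subseteq> sem M rs (ri(i:=m)) phi tau))"

lemma nf_sub: "i \<notin> fiv a \<Longrightarrow> sem M rs (ri(i := n)) a t \<subseteq> sem M rs (ri(i := m)) a t"
  using fiv_indep[of i a M rs ri n t m] by simp

lemma P_dom: "P M G a t \<Longrightarrow> valid M G rs \<Longrightarrow> x \<in> sem M rs ri a t \<Longrightarrow> x \<in> dom M t"
  unfolding P_def by blast
lemma P_mono: "P M G a t \<Longrightarrow> valid M G rs \<Longrightarrow> valid M G rs' \<Longrightarrow> le_env G rs rs' \<Longrightarrow>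
   x \<in> sem M rs ri a t \<Longrightarrow> x \<in> sem M rs' ri a t"
  unfolding P_def by blast
lemma P_pos: "P M G a t \<Longrightarrow> valid M G rs \<Longrightarrow> ipos i a \<Longrightarrow> n \<le> m \<Longrightarrow>
   x \<in> sem M rs (ri(i := n)) a t \<Longrightarrow> x \<in> sem M rs (ri(i := m)) a t"
  unfolding P_def by blast
lemma P_neg: "P M G a t \<Longrightarrow> valid M G rs \<Longrightarrow> ineg i a \<Longrightarrow> m \<le> n \<Longrightarrow>
   x \<in> sem M rs (ri(i := n)) a t \<Longrightarrow> x \<in> sem M rs (ri(i := m)) a t"
  unfolding P_def by blast
lemma P_I:
  assumes "\<And>rs ri x. valid M G rs \<Longrightarrow> x \<in> sem M rs ri a t \<Longrightarrow> x \<in> dom M t"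
   "\<And>rs rs' ri x. valid M G rs \<Longrightarrow> valid M G rs' \<Longrightarrow> le_env G rs rs' \<Longrightarrow>
      x \<in> sem M rs ri a t \<Longrightarrow> x \<in> sem M rs' ri a t"
   "\<And>rs ri i n m x. valid M G rs \<Longrightarrow> ipos i a \<Longrightarrow> n \<le> m \<Longrightarrow>
      x \<in> sem M rs (ri(i := n)) a t \<Longrightarrow> x \<in> sem M rs (ri(i := m)) a t"
   "\<And>rs ri i n m x. valid M G rs \<Longrightarrow> ineg i a \<Longrightarrow> m \<le> n \<Longrightarrow>
      x \<in> sem M rs (ri(i := n)) a t \<Longrightarrow> x \<in> sem M rs (ri(i := m)) a t"
  shows "P M G a t"
  unfolding P_def using assms by blast

lemma nf_mem: "i \<notin> fiv a \<Longrightarrow> x \<in> sem M rs (ri(i := n)) a t \<Longrightarrow> x \<in> sem M rs (ri(i := m)) a t"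
  using nf_sub[of i a M rs ri n t m] by blast

lemma P_weak:
  assumes P: "P M G a t" and le: "G \<subseteq>\<^sub>m G'"
  shows "P M G' a t"
proof -
  have vv: "valid M G rs" if "valid M G' rs" for rs
    using that le unfolding valid_def map_le_def by (metis domI)
  have ll: "le_env G rs rs'" if "le_env G' rs rs'" for rs rs'
    using that le unfolding le_env_def map_le_def by (metis domI)
  show ?thesis
  proof (rule P_I)
    show "x \<in> dom M t" if "valid M G' rs" "x \<in> sem M rs ri a t" for rs ri x
      using P_dom[OF P vv[OF that(1)] that(2)] .
    show "x \<in> sem M rs' ri a t" if "valid M G' rs" "valid M G' rs'" "le_env G' rs rs'"
      "x \<in> sem M rs ri a t" for rs rs' ri x
      using P_mono[OF P vv[OF that(1)] vv[OF that(2)] ll[OF that(3)] that(4)] .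
    show "x \<in> sem M rs (ri(i := m)) a t" if "valid M G' rs" "ipos i a" "n \<le> m"
      "x \<in> sem M rs (ri(i := n)) a t" for rs ri i n m x
      using P_pos[OF P vv[OF that(1)] that(2-4)] .
    show "x \<in> sem M rs (ri(i := m)) a t" if "valid M G' rs" "ineg i a" "m \<le> n"
      "x \<in> sem M rs (ri(i := n)) a t" for rs ri i n m x
      using P_neg[OF P vv[OF that(1)] that(2-4)] .
  qed
qed

inductive_cases pAndE: "ipos i (FAnd a b)"
inductive_cases nAndE: "ineg i (FAnd a b)"
inductive_cases pOrE: "ipos i (FOr a b)"
inductive_cases nOrE: "ineg i (FOr a b)"
inductive_cases pPi1E: "ipos i (FPi1 a)"
inductive_cases nPi1E: "ineg i (FPi1 a)"
inductive_cases pPi2E: "ipos i (FPi2 a)"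
inductive_cases nPi2E: "ineg i (FPi2 a)"
inductive_cases pInj1E: "ipos i (FInj1 a)"
inductive_cases nInj1E: "ineg i (FInj1 a)"
inductive_cases pInj2E: "ipos i (FInj2 a)"
inductive_cases nInj2E: "ineg i (FInj2 a)"
inductive_cases pFoldE: "ipos i (FFold a)"
inductive_cases nFoldE: "ineg i (FFold a)"
inductive_cases pMuE: "ipos i (FMu t X a)"
inductive_cases nMuE: "ineg i (FMu t X a)"
inductive_cases pNuE: "ipos i (FNu t X a)"
inductive_cases nNuE: "ineg i (FNu t X a)"
inductive_cases pExE: "ipos i (FEx j a)"
inductive_cases nExE: "ineg i (FEx j a)"
inductive_cases pAllE: "ipos i (FAll j a)"
inductive_cases nAllE: "ineg i (FAll j a)"
inductive_cases pImpE: "ipos i (FImp b a)"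
inductive_cases nImpE: "ineg i (FImp b a)"

lemma main:
  assumes "wf s G phi tau" and ok: "sem_ok M"
  shows "P M G phi tau"
  using assms(1)
proof (induction rule: wf.induct)
  case (wf_true t s G)
  then show ?case by (auto simp: P_def)
next
  case (wf_false t s G)
  then show ?case by (auto simp: P_def)
next
  case (wf_and s G a t b)
  show ?case
  proof (rule P_I)
    fix rs ri x assume v: "valid M G rs" and x: "x \<in> sem M rs ri (FAnd a b) t"
    then show "x \<in> dom M t" using P_dom[OF wf_and.IH(1) v] P_dom[OF wf_and.IH(2) v] by (auto split: ty.splits)
  next
    fix rs rs' ri x assume v: "valid M G rs" and v': "valid M G rs'" and le: "le_env G rs rs'"
      and x: "x \<in> sem M rs ri (FAnd a b) t"
    then show "x \<in> sem M rs' ri (FAnd a b) t" using P_mono[OF wf_and.IH(1) v v' le] P_mono[OF wf_and.IH(2) v v' le] by (auto split: ty.splits)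
  next
    fix rs ri i n m x assume v: "valid M G rs" and p: "ipos i (FAnd a b)" and nm: "n \<le> m"
      and x: "x \<in> sem M rs (ri(i := n)) (FAnd a b) t"
    from p show "x \<in> sem M rs (ri(i := m)) (FAnd a b) t"
    proof (cases rule: pAndE[consumes 1])
      case 1 then have "i \<notin> fiv (FAnd a b)" using 1 by simp
      then show ?thesis using x by (rule nf_mem)
    next
      case 2 then show ?thesis using 2 x P_pos[OF wf_and.IH(1) v 2(1) nm] P_pos[OF wf_and.IH(2) v 2(2) nm] by (auto split: ty.splits)
    qed
  next
    fix rs ri i n m x assume v: "valid M G rs" and p: "ineg i (FAnd a b)" and nm: "m \<le> n"
      and x: "x \<in> sem M rs (ri(i := n)) (FAnd a b) t"
    from p show "x \<in> sem M rs (ri(i := m)) (FAnd a b) t"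
    proof (cases rule: nAndE[consumes 1])
      case 1 then have "i \<notin> fiv (FAnd a b)" using 1 by simp
      then show ?thesis using x by (rule nf_mem)
    next
      case 2 then show ?thesis using 2 x P_neg[OF wf_and.IH(1) v 2(1) nm] P_neg[OF wf_and.IH(2) v 2(2) nm] by (auto split: ty.splits)
    qed
  qed
next
  case (wf_or s G a t b)
  show ?case
  proof (rule P_I)
    fix rs ri x assume v: "valid M G rs" and x: "x \<in> sem M rs ri (FOr a b) t"
    then show "x \<in> dom M t" using P_dom[OF wf_or.IH(1) v] P_dom[OF wf_or.IH(2) v] by (auto split: ty.splits)
  next
    fix rs rs' ri x assume v: "valid M G rs" and v': "valid M G rs'" and le: "le_env G rs rs'"
      and x: "x \<in> sem M rs ri (FOr a b) t"
    then show "x \<in> sem M rs' ri (FOr a b) t" using P_mono[OF wf_or.IH(1) v v' le] P_mono[OF wf_or.IH(2) v v' le] by (auto split: ty.splits)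
  next
    fix rs ri i n m x assume v: "valid M G rs" and p: "ipos i (FOr a b)" and nm: "n \<le> m"
      and x: "x \<in> sem M rs (ri(i := n)) (FOr a b) t"
    from p show "x \<in> sem M rs (ri(i := m)) (FOr a b) t"
    proof (cases rule: pOrE[consumes 1])
      case 1 then have "i \<notin> fiv (FOr a b)" using 1 by simp
      then show ?thesis using x by (rule nf_mem)
    next
      case 2 then show ?thesis using 2 x P_pos[OF wf_or.IH(1) v 2(1) nm] P_pos[OF wf_or.IH(2) v 2(2) nm] by (auto split: ty.splits)
    qed
  next
    fix rs ri i n m x assume v: "valid M G rs" and p: "ineg i (FOr a b)" and nm: "m \<le> n"
      and x: "x \<in> sem M rs (ri(i := n)) (FOr a b) t"
    from p show "x \<in> sem M rs (ri(i := m)) (FOr a b) t"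
    proof (cases rule: nOrE[consumes 1])
      case 1 then have "i \<notin> fiv (FOr a b)" using 1 by simp
      then show ?thesis using x by (rule nf_mem)
    next
      case 2 then show ?thesis using 2 x P_neg[OF wf_or.IH(1) v 2(1) nm] P_neg[OF wf_or.IH(2) v 2(2) nm] by (auto split: ty.splits)
    qed
  qed
next
  case (wf_unit s G)
  then show ?case using ok by (auto simp: P_def sem_ok_def)
next
  case (wf_pi1 s G a t1 t2)
  show ?case
  proof (rule P_I)
    fix rs ri x assume v: "valid M G rs" and x: "x \<in> sem M rs ri (FPi1 a) (Prod t1 t2)"
    then show "x \<in> dom M (Prod t1 t2)" using P_dom[OF wf_pi1.IH v] by (auto split: ty.splits)
  next
    fix rs rs' ri x assume v: "valid M G rs" and v': "valid M G rs'" and le: "le_env G rs rs'"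
      and x: "x \<in> sem M rs ri (FPi1 a) (Prod t1 t2)"
    then show "x \<in> sem M rs' ri (FPi1 a) (Prod t1 t2)" using P_mono[OF wf_pi1.IH v v' le] by (auto split: ty.splits)
  next
    fix rs ri i n m x assume v: "valid M G rs" and p: "ipos i (FPi1 a)" and nm: "n \<le> m"
      and x: "x \<in> sem M rs (ri(i := n)) (FPi1 a) (Prod t1 t2)"
    from p show "x \<in> sem M rs (ri(i := m)) (FPi1 a) (Prod t1 t2)"
    proof (cases rule: pPi1E[consumes 1])
      case 1 then have "i \<notin> fiv (FPi1 a)" using 1 by simp
      then show ?thesis using x by (rule nf_mem)
    next
      case 2 then show ?thesis using 2 x P_pos[OF wf_pi1.IH v 2 nm] by (auto split: ty.splits)
    qed
  next
    fix rs ri i n m x assume v: "valid M G rs" and p: "ineg i (FPi1 a)" and nm: "m \<le> n"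
      and x: "x \<in> sem M rs (ri(i := n)) (FPi1 a) (Prod t1 t2)"
    from p show "x \<in> sem M rs (ri(i := m)) (FPi1 a) (Prod t1 t2)"
    proof (cases rule: nPi1E[consumes 1])
      case 1 then have "i \<notin> fiv (FPi1 a)" using 1 by simp
      then show ?thesis using x by (rule nf_mem)
    next
      case 2 then show ?thesis using 2 x P_neg[OF wf_pi1.IH v 2 nm] by (auto split: ty.splits)
    qed
  qed
next
  case (wf_pi2 s G a t2 t1)
  show ?case
  proof (rule P_I)
    fix rs ri x assume v: "valid M G rs" and x: "x \<in> sem M rs ri (FPi2 a) (Prod t1 t2)"
    then show "x \<in> dom M (Prod t1 t2)" using P_dom[OF wf_pi2.IH v] by (auto split: ty.splits)
  next
    fix rs rs' ri x assume v: "valid M G rs" and v': "valid M G rs'" and le: "le_env G rs rs'"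
      and x: "x \<in> sem M rs ri (FPi2 a) (Prod t1 t2)"
    then show "x \<in> sem M rs' ri (FPi2 a) (Prod t1 t2)" using P_mono[OF wf_pi2.IH v v' le] by (auto split: ty.splits)
  next
    fix rs ri i n m x assume v: "valid M G rs" and p: "ipos i (FPi2 a)" and nm: "n \<le> m"
      and x: "x \<in> sem M rs (ri(i := n)) (FPi2 a) (Prod t1 t2)"
    from p show "x \<in> sem M rs (ri(i := m)) (FPi2 a) (Prod t1 t2)"
    proof (cases rule: pPi2E[consumes 1])
      case 1 then have "i \<notin> fiv (FPi2 a)" using 1 by simp
      then show ?thesis using x by (rule nf_mem)
    next
      case 2 then show ?thesis using 2 x P_pos[OF wf_pi2.IH v 2 nm] by (auto split: ty.splits)
    qed
  next
    fix rs ri i n m x assume v: "valid M G rs" and p: "ineg i (FPi2 a)" and nm: "m \<le> n"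
      and x: "x \<in> sem M rs (ri(i := n)) (FPi2 a) (Prod t1 t2)"
    from p show "x \<in> sem M rs (ri(i := m)) (FPi2 a) (Prod t1 t2)"
    proof (cases rule: nPi2E[consumes 1])
      case 1 then have "i \<notin> fiv (FPi2 a)" using 1 by simp
      then show ?thesis using x by (rule nf_mem)
    next
      case 2 then show ?thesis using 2 x P_neg[OF wf_pi2.IH v 2 nm] by (auto split: ty.splits)
    qed
  qed
next
  case (wf_inj1 s G a t1 t2)
  show ?case
  proof (rule P_I)
    fix rs ri x assume v: "valid M G rs" and x: "x \<in> sem M rs ri (FInj1 a) (Sum t1 t2)"
    have c: "closed_ty t1" "closed_ty t2" using wf_inj1 wf_closed by blast+
    from x show "x \<in> dom M (Sum t1 t2)" using P_dom[OF wf_inj1.IH v] c ok unfolding sem_ok_def by auto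
  next
    fix rs rs' ri x assume v: "valid M G rs" and v': "valid M G rs'" and le: "le_env G rs rs'"
      and x: "x \<in> sem M rs ri (FInj1 a) (Sum t1 t2)"
    then show "x \<in> sem M rs' ri (FInj1 a) (Sum t1 t2)" using P_mono[OF wf_inj1.IH v v' le] by (auto split: ty.splits)
  next
    fix rs ri i n m x assume v: "valid M G rs" and p: "ipos i (FInj1 a)" and nm: "n \<le> m"
      and x: "x \<in> sem M rs (ri(i := n)) (FInj1 a) (Sum t1 t2)"
    from p show "x \<in> sem M rs (ri(i := m)) (FInj1 a) (Sum t1 t2)"
    proof (cases rule: pInj1E[consumes 1])
      case 1 then have "i \<notin> fiv (FInj1 a)" using 1 by simp
      then show ?thesis using x by (rule nf_mem)
    next
      case 2 then show ?thesis using 2 x P_pos[OF wf_inj1.IH v 2 nm] by (auto split: ty.splits)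
    qed
  next
    fix rs ri i n m x assume v: "valid M G rs" and p: "ineg i (FInj1 a)" and nm: "m \<le> n"
      and x: "x \<in> sem M rs (ri(i := n)) (FInj1 a) (Sum t1 t2)"
    from p show "x \<in> sem M rs (ri(i := m)) (FInj1 a) (Sum t1 t2)"
    proof (cases rule: nInj1E[consumes 1])
      case 1 then have "i \<notin> fiv (FInj1 a)" using 1 by simp
      then show ?thesis using x by (rule nf_mem)
    next
      case 2 then show ?thesis using 2 x P_neg[OF wf_inj1.IH v 2 nm] by (auto split: ty.splits)
    qed
  qed
next
  case (wf_inj2 s G a t2 t1)
  show ?case
  proof (rule P_I)
    fix rs ri x assume v: "valid M G rs" and x: "x \<in> sem M rs ri (FInj2 a) (Sum t1 t2)"
    have c: "closed_ty t1" "closed_ty t2" using wf_inj2 wf_closed by blast+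
    from x show "x \<in> dom M (Sum t1 t2)" using P_dom[OF wf_inj2.IH v] c ok unfolding sem_ok_def by auto
  next
    fix rs rs' ri x assume v: "valid M G rs" and v': "valid M G rs'" and le: "le_env G rs rs'"
      and x: "x \<in> sem M rs ri (FInj2 a) (Sum t1 t2)"
    then show "x \<in> sem M rs' ri (FInj2 a) (Sum t1 t2)" using P_mono[OF wf_inj2.IH v v' le] by (auto split: ty.splits)
  next
    fix rs ri i n m x assume v: "valid M G rs" and p: "ipos i (FInj2 a)" and nm: "n \<le> m"
      and x: "x \<in> sem M rs (ri(i := n)) (FInj2 a) (Sum t1 t2)"
    from p show "x \<in> sem M rs (ri(i := m)) (FInj2 a) (Sum t1 t2)"
    proof (cases rule: pInj2E[consumes 1])
      case 1 then have "i \<notin> fiv (FInj2 a)" using 1 by simp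
      then show ?thesis using x by (rule nf_mem)
    next
      case 2 then show ?thesis using 2 x P_pos[OF wf_inj2.IH v 2 nm] by (auto split: ty.splits)
    qed
  next
    fix rs ri i n m x assume v: "valid M G rs" and p: "ineg i (FInj2 a)" and nm: "m \<le> n"
      and x: "x \<in> sem M rs (ri(i := n)) (FInj2 a) (Sum t1 t2)"
    from p show "x \<in> sem M rs (ri(i := m)) (FInj2 a) (Sum t1 t2)"
    proof (cases rule: nInj2E[consumes 1])
      case 1 then have "i \<notin> fiv (FInj2 a)" using 1 by simp
      then show ?thesis using x by (rule nf_mem)
    next
      case 2 then show ?thesis using 2 x P_neg[OF wf_inj2.IH v 2 nm] by (auto split: ty.splits)
    qed
  qed
next
  case (wf_fold s G a t)
  show ?case
  proof (rule P_I)
    fix rs ri x assume v: "valid M G rs" and x: "x \<in> sem M rs ri (FFold a) (Mu t)"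
    then show "x \<in> dom M (Mu t)" using P_dom[OF wf_fold.IH v] by (auto split: ty.splits)
  next
    fix rs rs' ri x assume v: "valid M G rs" and v': "valid M G rs'" and le: "le_env G rs rs'"
      and x: "x \<in> sem M rs ri (FFold a) (Mu t)"
    then show "x \<in> sem M rs' ri (FFold a) (Mu t)" using P_mono[OF wf_fold.IH v v' le] by (auto split: ty.splits)
  next
    fix rs ri i n m x assume v: "valid M G rs" and p: "ipos i (FFold a)" and nm: "n \<le> m"
      and x: "x \<in> sem M rs (ri(i := n)) (FFold a) (Mu t)"
    from p show "x \<in> sem M rs (ri(i := m)) (FFold a) (Mu t)"
    proof (cases rule: pFoldE[consumes 1])
      case 1 then have "i \<notin> fiv (FFold a)" using 1 by simp
      then show ?thesis using x by (rule nf_mem)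
    next
      case 2 then show ?thesis using 2 x P_pos[OF wf_fold.IH v 2 nm] by (auto split: ty.splits)
    qed
  next
    fix rs ri i n m x assume v: "valid M G rs" and p: "ineg i (FFold a)" and nm: "m \<le> n"
      and x: "x \<in> sem M rs (ri(i := n)) (FFold a) (Mu t)"
    from p show "x \<in> sem M rs (ri(i := m)) (FFold a) (Mu t)"
    proof (cases rule: nFoldE[consumes 1])
      case 1 then have "i \<notin> fiv (FFold a)" using 1 by simp
      then show ?thesis using x by (rule nf_mem)
    next
      case 2 then show ?thesis using 2 x P_neg[OF wf_fold.IH v 2 nm] by (auto split: ty.splits)
    qed
  qed
next
  case (wf_var G X t s)
  then show ?case unfolding P_def valid_def le_env_def by auto
next
  case (wf_weak s G a t G')
  show ?case using P_weak[OF wf_weak.IH wf_weak.hyps(2)] .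
next
  case (wf_ex G a t j)
  show ?case unfolding P_def
  proof (intro allI impI, intro conjI)
    fix rs ri assume v: "valid M G rs"
    show "sem M rs ri (FEx j a) t \<subseteq> dom M t" using P_dom[OF wf_ex.IH v] by auto
    show "\<forall>rs'. valid M G rs' \<longrightarrow> le_env G rs rs' \<longrightarrow> sem M rs ri (FEx j a) t \<subseteq> sem M rs' ri (FEx j a) t"
      using P_mono[OF wf_ex.IH v] by fastforce
    show "\<forall>i n m. ipos i (FEx j a) \<longrightarrow> n \<le> m \<longrightarrow> sem M rs (ri(i := n)) (FEx j a) t \<subseteq> sem M rs (ri(i := m)) (FEx j a) t"
    proof (intro allI impI)
      fix i n m :: nat assume p: "ipos i (FEx j a)" and nm: "n \<le> m"
      show "sem M rs (ri(i := n)) (FEx j a) t \<subseteq> sem M rs (ri(i := m)) (FEx j a) t"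
      proof (cases "i = j")
        case True then show ?thesis by (simp del: fun_upd_apply)
      next
        case False
        from p show ?thesis
        proof (cases rule: pExE[consumes 1])
          case 1 then show ?thesis by (rule nf_sub)
        next
          case 2
          have "sem M rs (ri(j := k, i := n)) a t \<subseteq> sem M rs (ri(j := k, i := m)) a t" for k
            using P_pos[OF wf_ex.IH v 2 nm] by blast
          then show ?thesis using False by (auto simp del: fun_upd_apply simp: fun_upd_twist)
        qed
      qed
    qed
    show "\<forall>i n m. ineg i (FEx j a) \<longrightarrow> m \<le> n \<longrightarrow> sem M rs (ri(i := n)) (FEx j a) t \<subseteq> sem M rs (ri(i := m)) (FEx j a) t"
    proof (intro allI impI)
      fix i n m :: nat assume "ineg i (FEx j a)"
      then have "i \<notin> fiv (FEx j a)" by (cases rule: nExE[consumes 1])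
      then show "sem M rs (ri(i := n)) (FEx j a) t \<subseteq> sem M rs (ri(i := m)) (FEx j a) t" by (rule nf_sub)
    qed
  qed
next
  case (wf_all G a t j)
  show ?case unfolding P_def
  proof (intro allI impI, intro conjI)
    fix rs ri assume v: "valid M G rs"
    show "sem M rs ri (FAll j a) t \<subseteq> dom M t" using P_dom[OF wf_all.IH v] by auto
    show "\<forall>rs'. valid M G rs' \<longrightarrow> le_env G rs rs' \<longrightarrow> sem M rs ri (FAll j a) t \<subseteq> sem M rs' ri (FAll j a) t"
      using P_mono[OF wf_all.IH v] by fastforce
    show "\<forall>i n m. ineg i (FAll j a) \<longrightarrow> m \<le> n \<longrightarrow> sem M rs (ri(i := n)) (FAll j a) t \<subseteq> sem M rs (ri(i := m)) (FAll j a) t"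
    proof (intro allI impI)
      fix i n m :: nat assume p: "ineg i (FAll j a)" and nm: "m \<le> n"
      show "sem M rs (ri(i := n)) (FAll j a) t \<subseteq> sem M rs (ri(i := m)) (FAll j a) t"
      proof (cases "i = j")
        case True then show ?thesis by (simp del: fun_upd_apply)
      next
        case False
        from p show ?thesis
        proof (cases rule: nAllE[consumes 1])
          case 1 then show ?thesis by (rule nf_sub)
        next
          case 2
          have "sem M rs (ri(j := k, i := n)) a t \<subseteq> sem M rs (ri(j := k, i := m)) a t" for k
            using P_neg[OF wf_all.IH v 2 nm] by blast
          then show ?thesis using False by (auto simp del: fun_upd_apply simp: fun_upd_twist)
        qed
      qed
    qed
    show "\<forall>i n m. ipos i (FAll j a) \<longrightarrow> n \<le> m \<longrightarrow> sem M rs (ri(i := n)) (FAll j a) t \<subseteq> sem M rs (ri(i := m)) (FAll j a) t"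
    proof (intro allI impI)
      fix i n m :: nat assume "ipos i (FAll j a)"
      then have "i \<notin> fiv (FAll j a)" by (cases rule: pAllE[consumes 1])
      then show "sem M rs (ri(i := n)) (FAll j a) t \<subseteq> sem M rs (ri(i := m)) (FAll j a) t" by (rule nf_sub)
    qed
  qed
next
  case (wf_imp s b sg a t)
  have v: "valid M Map.empty rs" "le_env Map.empty rs rs'" for rs rs' :: "nat \<Rightarrow> 'a set"
    by (auto simp: valid_def le_env_def)
  have B0: "x \<in> sem M rs ri b sg \<Longrightarrow> x \<in> sem M rs' ri b sg" for rs rs' ri x
    by (rule P_mono[OF wf_imp.IH(1)]) (auto simp: valid_def le_env_def)
  have B1: "x \<in> sem M rs ri a t \<Longrightarrow> x \<in> sem M rs' ri a t" for rs rs' ri x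
    by (rule P_mono[OF wf_imp.IH(2)]) (auto simp: valid_def le_env_def)
  have B: "sem M rs ri b sg = sem M rs' ri b sg" "sem M rs ri a t \<subseteq> sem M rs' ri a t" for rs rs' ri
    using B0 B1 by blast+
  have Bi1: "sem M rs (ri(i := n)) b sg \<subseteq> sem M rs (ri(i := m)) b sg" if "ipos i b" "n \<le> m" for rs ri i n m
    using P_pos[OF wf_imp.IH(1) v(1) that] by blast
  have Bi2: "sem M rs (ri(i := n)) b sg \<subseteq> sem M rs (ri(i := m)) b sg" if "ineg i b" "m \<le> n" for rs ri i n m
    using P_neg[OF wf_imp.IH(1) v(1) that] by blast
  have Bi3: "sem M rs (ri(i := n)) a t \<subseteq> sem M rs (ri(i := m)) a t" if "ipos i a" "n \<le> m" for rs ri i n m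
    using P_pos[OF wf_imp.IH(2) v(1) that] by blast
  have Bi4: "sem M rs (ri(i := n)) a t \<subseteq> sem M rs (ri(i := m)) a t" if "ineg i a" "m \<le> n" for rs ri i n m
    using P_neg[OF wf_imp.IH(2) v(1) that] by blast
  note Bi = Bi1 Bi2 Bi3 Bi4
  show ?case unfolding P_def
  proof (intro allI impI, intro conjI)
    fix rs ri
    show "sem M rs ri (FImp b a) (Arr sg t) \<subseteq> dom M (Arr sg t)" by auto
    show "\<forall>rs'. valid M Map.empty rs' \<longrightarrow> le_env Map.empty rs rs' \<longrightarrow> sem M rs ri (FImp b a) (Arr sg t) \<subseteq> sem M rs' ri (FImp b a) (Arr sg t)"
      using B by fastforce
    show "\<forall>i n m. ipos i (FImp b a) \<longrightarrow> n \<le> m \<longrightarrow> sem M rs (ri(i := n)) (FImp b a) (Arr sg t) \<subseteq> sem M rs (ri(i := m)) (FImp b a) (Arr sg t)"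
    proof (intro allI impI)
      fix i n m :: nat assume p: "ipos i (FImp b a)" and nm: "n \<le> m"
      from p show "sem M rs (ri(i := n)) (FImp b a) (Arr sg t) \<subseteq> sem M rs (ri(i := m)) (FImp b a) (Arr sg t)"
      proof (cases rule: pImpE[consumes 1])
        case 1 then show ?thesis by (rule nf_sub)
      next
        case 2
        have x: "sem M rs (ri(i := m)) b sg \<subseteq> sem M rs (ri(i := n)) b sg" using Bi(2)[OF 2(1) nm] .
        have y: "sem M rs (ri(i := n)) a t \<subseteq> sem M rs (ri(i := m)) a t" using Bi(3)[OF 2(2) nm] .
        show ?thesis using x y by (auto simp del: fun_upd_apply)
      qed
    qed
    show "\<forall>i n m. ineg i (FImp b a) \<longrightarrow> m \<le> n \<longrightarrow> sem M rs (ri(i := n)) (FImp b a) (Arr sg t) \<subseteq> sem M rs (ri(i := m)) (FImp b a) (Arr sg t)"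
    proof (intro allI impI)
      fix i n m :: nat assume p: "ineg i (FImp b a)" and nm: "m \<le> n"
      from p show "sem M rs (ri(i := n)) (FImp b a) (Arr sg t) \<subseteq> sem M rs (ri(i := m)) (FImp b a) (Arr sg t)"
      proof (cases rule: nImpE[consumes 1])
        case 1 then show ?thesis by (rule nf_sub)
      next
        case 2
        have x: "sem M rs (ri(i := m)) b sg \<subseteq> sem M rs (ri(i := n)) b sg" using Bi(1)[OF 2(1) nm] .
        have y: "sem M rs (ri(i := n)) a t \<subseteq> sem M rs (ri(i := m)) a t" using Bi(4)[OF 2(2) nm] .
        show ?thesis using x y by (auto simp del: fun_upd_apply)
      qed
    qed
  qed
next
  case (wf_mu s G X t a tm)
  define F where "F = (\<lambda>rs ri S. sem M (rs(X := S)) ri a t)"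
  have IH: "P M (G(X \<mapsto> t)) a t" by (rule wf_mu.IH)
  have vX: "valid M (G(X \<mapsto> t)) (rs(X := S))" if "valid M G rs" "S \<subseteq> dom M t" for rs S
    using that unfolding valid_def by auto
  have Fdom: "F rs ri A \<subseteq> dom M t" if "valid M G rs" "A \<subseteq> dom M t" for rs ri A
    unfolding F_def using P_dom[OF IH vX[OF that]] by blast
  have Fmono: "F rs ri A \<subseteq> F rs' ri B" if "valid M G rs" "valid M G rs'" "le_env G rs rs'"
     "A \<subseteq> B" "B \<subseteq> dom M t" for rs rs' ri A B
  proof -
    have l: "le_env (G(X \<mapsto> t)) (rs(X := A)) (rs'(X := B))"
      using that(3,4) unfolding le_env_def by auto
    show ?thesis unfolding F_def
      using P_mono[OF IH vX[OF that(1)] vX[OF that(2,5)] l] that(4,5) by blast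
  qed
  have Fmono1: "F rs ri A \<subseteq> F rs ri B" if "valid M G rs" "A \<subseteq> B" "B \<subseteq> dom M t" for rs ri A B
    using Fmono[OF that(1) that(1) _ that(2,3)] unfolding le_env_def by blast
  have Fpos: "F rs (ri(i := n)) A \<subseteq> F rs (ri(i := m)) B" if "valid M G rs" "ipos i a" "n \<le> m"
     "A \<subseteq> B" "B \<subseteq> dom M t" for rs ri i n m A B
  proof -
    have "F rs (ri(i := n)) A \<subseteq> F rs (ri(i := n)) B" using Fmono1 that by blast
    also have "\<dots> \<subseteq> F rs (ri(i := m)) B" unfolding F_def
      using P_pos[OF IH vX[OF that(1,5)] that(2,3)] by blast
    finally show ?thesis .
  qed
  have Fneg: "F rs (ri(i := n)) A \<subseteq> F rs (ri(i := m)) B" if "valid M G rs" "ineg i a" "m \<le> n"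
     "A \<subseteq> B" "B \<subseteq> dom M t" for rs ri i n m A B
  proof -
    have "F rs (ri(i := n)) A \<subseteq> F rs (ri(i := n)) B" using Fmono1 that by blast
    also have "\<dots> \<subseteq> F rs (ri(i := m)) B" unfolding F_def
      using P_neg[OF IH vX[OF that(1,5)] that(2,3)] by blast
    finally show ?thesis .
  qed
  have S: "sem M rs ri (FMu tm X a) t = (F rs ri ^^ itm_eval ri tm) ({})" for rs ri
    unfolding F_def by simp
  show ?case
  proof (rule P_I)
    fix rs ri x assume v: "valid M G rs" and x: "x \<in> sem M rs ri (FMu tm X a) t"
    have "(F rs ri ^^ itm_eval ri tm) ({}) \<subseteq> dom M t"
      by (rule fp_into) (use Fdom[OF v] in auto)
    then show "x \<in> dom M t" using x unfolding S by auto
  next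
    fix rs rs' ri x assume v: "valid M G rs" and v': "valid M G rs'" and le: "le_env G rs rs'"
      and x: "x \<in> sem M rs ri (FMu tm X a) t"
    have "(F rs ri ^^ itm_eval ri tm) ({}) \<subseteq> (F rs' ri ^^ itm_eval ri tm) ({})"
      by (rule fp_mono2[of "dom M t"]) (use Fmono[OF v v' le] Fdom[OF v'] in auto)
    then show "x \<in> sem M rs' ri (FMu tm X a) t" using x unfolding S by auto
  next
    fix rs ri i n m x assume v: "valid M G rs" and p: "ipos i (FMu tm X a)" and nm: "n \<le> m"
      and x: "x \<in> sem M rs (ri(i := n)) (FMu tm X a) t"
    from p show "x \<in> sem M rs (ri(i := m)) (FMu tm X a) t"
    proof (cases rule: pMuE[consumes 1])
      case 1 then show ?thesis using x by (rule nf_mem)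
    next
      case 2
      have k: "itm_eval (ri(i := n)) tm \<le> itm_eval (ri(i := m)) tm" using itm_mono nm by blast
      have "(F rs (ri(i := n)) ^^ itm_eval (ri(i := n)) tm) {} \<subseteq> (F rs (ri(i := m)) ^^ itm_eval (ri(i := n)) tm) {}"
        by (rule fp_mono2[of "dom M t"]) (use Fpos[OF v 2 nm] Fdom[OF v] in auto)
      also have "\<dots> \<subseteq> (F rs (ri(i := m)) ^^ itm_eval (ri(i := m)) tm) {}"
        by (rule fp_inc2[of "dom M t"]) (use Fmono1[OF v] Fdom[OF v] k in auto)
      finally show ?thesis using x unfolding S by auto
    qed
  next
    fix rs ri i n m x assume v: "valid M G rs" and p: "ineg i (FMu tm X a)" and nm: "m \<le> n"
      and x: "x \<in> sem M rs (ri(i := n)) (FMu tm X a) t"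
    from p show "x \<in> sem M rs (ri(i := m)) (FMu tm X a) t"
    proof (cases rule: nMuE[consumes 1])
      case 1 then show ?thesis using x by (rule nf_mem)
    next
      case 2
      have k: "itm_eval (ri(i := n)) tm = itm_eval (ri(i := m)) tm" using itm_indep 2(2) by blast
      have "(F rs (ri(i := n)) ^^ itm_eval (ri(i := n)) tm) {} \<subseteq> (F rs (ri(i := m)) ^^ itm_eval (ri(i := n)) tm) {}"
        by (rule fp_mono2[of "dom M t"]) (use Fneg[OF v 2(1) nm] Fdom[OF v] in auto)
      then show ?thesis using x k unfolding S by auto
    qed
  qed
next
  case (wf_nu s G X t a tm)
  define F where "F = (\<lambda>rs ri S. sem M (rs(X := S)) ri a t)"
  have IH: "P M (G(X \<mapsto> t)) a t" by (rule wf_nu.IH)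
  have vX: "valid M (G(X \<mapsto> t)) (rs(X := S))" if "valid M G rs" "S \<subseteq> dom M t" for rs S
    using that unfolding valid_def by auto
  have Fdom: "F rs ri A \<subseteq> dom M t" if "valid M G rs" "A \<subseteq> dom M t" for rs ri A
    unfolding F_def using P_dom[OF IH vX[OF that]] by blast
  have Fmono: "F rs ri A \<subseteq> F rs' ri B" if "valid M G rs" "valid M G rs'" "le_env G rs rs'"
     "A \<subseteq> B" "B \<subseteq> dom M t" for rs rs' ri A B
  proof -
    have l: "le_env (G(X \<mapsto> t)) (rs(X := A)) (rs'(X := B))"
      using that(3,4) unfolding le_env_def by auto
    show ?thesis unfolding F_def
      using P_mono[OF IH vX[OF that(1)] vX[OF that(2,5)] l] that(4,5) by blast
  qed
  have Fmono1: "F rs ri A \<subseteq> F rs ri B" if "valid M G rs" "A \<subseteq> B" "B \<subseteq> dom M t" for rs ri A B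
    using Fmono[OF that(1) that(1) _ that(2,3)] unfolding le_env_def by blast
  have Fpos: "F rs (ri(i := n)) A \<subseteq> F rs (ri(i := m)) B" if "valid M G rs" "ipos i a" "n \<le> m"
     "A \<subseteq> B" "B \<subseteq> dom M t" for rs ri i n m A B
  proof -
    have "F rs (ri(i := n)) A \<subseteq> F rs (ri(i := n)) B" using Fmono1 that by blast
    also have "\<dots> \<subseteq> F rs (ri(i := m)) B" unfolding F_def
      using P_pos[OF IH vX[OF that(1,5)] that(2,3)] by blast
    finally show ?thesis .
  qed
  have Fneg: "F rs (ri(i := n)) A \<subseteq> F rs (ri(i := m)) B" if "valid M G rs" "ineg i a" "m \<le> n"
     "A \<subseteq> B" "B \<subseteq> dom M t" for rs ri i n m A B
  proof -
    have "F rs (ri(i := n)) A \<subseteq> F rs (ri(i := n)) B" using Fmono1 that by blast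
    also have "\<dots> \<subseteq> F rs (ri(i := m)) B" unfolding F_def
      using P_neg[OF IH vX[OF that(1,5)] that(2,3)] by blast
    finally show ?thesis .
  qed
  have S: "sem M rs ri (FNu tm X a) t = (F rs ri ^^ itm_eval ri tm) (dom M t)" for rs ri
    unfolding F_def by simp
  show ?case
  proof (rule P_I)
    fix rs ri x assume v: "valid M G rs" and x: "x \<in> sem M rs ri (FNu tm X a) t"
    have "(F rs ri ^^ itm_eval ri tm) (dom M t) \<subseteq> dom M t"
      by (rule fp_into) (use Fdom[OF v] in auto)
    then show "x \<in> dom M t" using x unfolding S by auto
  next
    fix rs rs' ri x assume v: "valid M G rs" and v': "valid M G rs'" and le: "le_env G rs rs'"
      and x: "x \<in> sem M rs ri (FNu tm X a) t"
    have "(F rs ri ^^ itm_eval ri tm) (dom M t) \<subseteq> (F rs' ri ^^ itm_eval ri tm) (dom M t)"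
      by (rule fp_mono2[of "dom M t"]) (use Fmono[OF v v' le] Fdom[OF v'] in auto)
    then show "x \<in> sem M rs' ri (FNu tm X a) t" using x unfolding S by auto
  next
    fix rs ri i n m x assume v: "valid M G rs" and p: "ipos i (FNu tm X a)" and nm: "n \<le> m"
      and x: "x \<in> sem M rs (ri(i := n)) (FNu tm X a) t"
    from p show "x \<in> sem M rs (ri(i := m)) (FNu tm X a) t"
    proof (cases rule: pNuE[consumes 1])
      case 1 then show ?thesis using x by (rule nf_mem)
    next
      case 2
      have k: "itm_eval (ri(i := n)) tm = itm_eval (ri(i := m)) tm" using itm_indep 2(2) by blast
      have "(F rs (ri(i := n)) ^^ itm_eval (ri(i := n)) tm) (dom M t) \<subseteq> (F rs (ri(i := m)) ^^ itm_eval (ri(i := n)) tm) (dom M t)"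
        by (rule fp_mono2[of "dom M t"]) (use Fpos[OF v 2(1) nm] Fdom[OF v] in auto)
      then show ?thesis using x k unfolding S by auto
    qed
  next
    fix rs ri i n m x assume v: "valid M G rs" and p: "ineg i (FNu tm X a)" and nm: "m \<le> n"
      and x: "x \<in> sem M rs (ri(i := n)) (FNu tm X a) t"
    from p show "x \<in> sem M rs (ri(i := m)) (FNu tm X a) t"
    proof (cases rule: nNuE[consumes 1])
      case 1 then show ?thesis using x by (rule nf_mem)
    next
      case 2
      have k: "itm_eval (ri(i := m)) tm \<le> itm_eval (ri(i := n)) tm" using itm_mono nm by blast
      have "(F rs (ri(i := n)) ^^ itm_eval (ri(i := n)) tm) (dom M t) \<subseteq> (F rs (ri(i := n)) ^^ itm_eval (ri(i := m)) tm) (dom M t)"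
        by (rule fp_dec2[of "dom M t"]) (use Fmono1[OF v] Fdom[OF v] k in auto)
      also have "\<dots> \<subseteq> (F rs (ri(i := m)) ^^ itm_eval (ri(i := m)) tm) (dom M t)"
        by (rule fp_mono2[of "dom M t"]) (use Fneg[OF v 2 nm] Fdom[OF v] in auto)
      finally show ?thesis using x unfolding S by auto
    qed
  qed
qed

theorem lemma5p5:
  fixes M :: "'d sem_struct"
    and s :: pol and G :: "nat \<rightharpoonup> ty" and phi :: form and tau :: ty
    and rs :: "nat \<Rightarrow> 'd set" and ri :: "nat \<Rightarrow> nat" and i n m :: nat
  assumes "sem_ok M"
    and "wf s G phi tau"
    and "\<And>X sg. G X = Some sg \<Longrightarrow> rs X \<subseteq> dom M sg"
  shows "(ipos i phi \<longrightarrow> n \<le> m \<longrightarrow>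
            sem M rs (ri(i := n)) phi tau \<subseteq> sem M rs (ri(i := m)) phi tau)
       \<and> (ineg i phi \<longrightarrow> m \<le> n \<longrightarrow>
            sem M rs (ri(i := n)) phi tau \<subseteq> sem M rs (ri(i := m)) phi tau)"
proof -
  have "valid M G rs" using assms(3) by (auto simp: valid_def)
  then show ?thesis using main[OF assms(2,1)] unfolding P_def by blast
qed

end
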